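(* Let $\phi:\mathbb{M}_n\to\mathbb{M}_m$ be a positive linear map with Hilbert–Schmidt adjoint $\phi^*$, and let $X\in\mathbb{M}_m^+$. Then: (1) $\ker(R_X)\subseteq\ker(\phi^* )$ if and only if $\ker(X)\subseteq\ker(\phi(\mathbf{1}_n))$; (2) if $\ker(R_X)\subseteq\ker(\phi^* )$, then $\ker(R_{\phi^*(X)})\subseteq\ker(\phi)$. The same two statements hold with $L_X$ and $L_{\phi^*(X)}$ in place of $R_X$ and $R_{\phi^*(X)}$.
   Context: $\mathbb{M}_k$ denotes the complex $k\times k$ matrices, $\mathbb{M}_k^+$ the positive semidefinite ones, $\mathbf{1}_n$ the identity. The adjoint $\phi^*:\mathbb{M}_m\to\mathbb{M}_n$ is with respect to $\langle A,B\rangle=\mathrm{Tr}[A^*B]$. For $X\in\mathbb{M}_k$, $R_X$ and $L_X$ are the linear operators on $\mathbb{M}_k$ given by $R_X(A)=AX$ and $L_X(A)=XA$; kernels of $R_X$, $\phi^*$, $\phi$ are kernels as linear maps on matrix spaces. A positive map sends positive semidefinite matrices to positive semidefinite matrices. *)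

theory Defs
  imports "Jordan_Normal_Form.Schur_Decomposition" "Jordan_Normal_Form.Matrix_Kernel"
begin

definition psd_mat :: "nat \<Rightarrow> complex mat \<Rightarrow> bool" where
  "psd_mat k A \<longleftrightarrow> A \<in> carrier_mat k k \<and> mat_adjoint A = A \<and>
     (\<forall>v \<in> carrier_vec k. (conjugate v \<bullet> (A *\<^sub>v v)) \<in> \<real> \<and> 0 \<le> Re (conjugate v \<bullet> (A *\<^sub>v v)))"

definition lin_map :: "nat \<Rightarrow> nat \<Rightarrow> (complex mat \<Rightarrow> complex mat) \<Rightarrow> bool" where
  "lin_map k l f \<longleftrightarrow>
     (\<forall>A \<in> carrier_mat k k. f A \<in> carrier_mat l l) \<and>
     (\<forall>A \<in> carrier_mat k k. \<forall>B \<in> carrier_mat k k. f (A + B) = f A + f B) \<and>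
     (\<forall>c. \<forall>A \<in> carrier_mat k k. f (c \<cdot>\<^sub>m A) = c \<cdot>\<^sub>m f A)"

definition positive_map :: "nat \<Rightarrow> nat \<Rightarrow> (complex mat \<Rightarrow> complex mat) \<Rightarrow> bool" where
  "positive_map k l f \<longleftrightarrow> (\<forall>A. psd_mat k A \<longrightarrow> psd_mat l (f A))"

definition mat_trace :: "complex mat \<Rightarrow> complex" where
  "mat_trace A = (\<Sum>i<dim_row A. A $$ (i, i))"

definition is_hs_adjoint :: "nat \<Rightarrow> nat \<Rightarrow> (complex mat \<Rightarrow> complex mat) \<Rightarrow> (complex mat \<Rightarrow> complex mat) \<Rightarrow> bool" where
  "is_hs_adjoint k l f g \<longleftrightarrow>
     (\<forall>A \<in> carrier_mat l l. g A \<in> carrier_mat k k) \<and>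
     (\<forall>A \<in> carrier_mat l l. \<forall>B \<in> carrier_mat k k.
        mat_trace (mat_adjoint A * f B) = mat_trace (mat_adjoint (g A) * B))"

definition map_ker :: "nat \<Rightarrow> nat \<Rightarrow> (complex mat \<Rightarrow> complex mat) \<Rightarrow> complex mat set" where
  "map_ker k l f = {A \<in> carrier_mat k k. f A = 0\<^sub>m l l}"

definition R_op :: "complex mat \<Rightarrow> complex mat \<Rightarrow> complex mat" where
  "R_op X = (\<lambda>A. A * X)"

definition L_op :: "complex mat \<Rightarrow> complex mat \<Rightarrow> complex mat" where
  "L_op X = (\<lambda>A. X * A)"

end

theory Submission
  imports Defs
begin

definition qf :: "nat \<Rightarrow> complex mat \<Rightarrow> (nat \<Rightarrow> complex) \<Rightarrow> complex" where
  "qf k M f = (\<Sum>i<k. \<Sum>j<k. cnj (f i) * M$$(i,j) * f j)"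

definition hs :: "nat \<Rightarrow> complex mat \<Rightarrow> complex mat \<Rightarrow> complex" where
  "hs k A B = (\<Sum>i<k. \<Sum>j<k. cnj (A$$(i,j)) * B$$(i,j))"

lemma adj_carrier: "A \<in> carrier_mat k l \<Longrightarrow> mat_adjoint A \<in> carrier_mat l k"
  unfolding mat_adjoint_def by (simp add: mat_of_rows_def)

lemma adj_idx: "A \<in> carrier_mat k l \<Longrightarrow> i < l \<Longrightarrow> j < k \<Longrightarrow> mat_adjoint A $$ (i,j) = cnj (A $$ (j,i))"
  unfolding mat_adjoint_def by (simp add: mat_of_rows_def)

lemma rowcol: assumes "A \<in> carrier_mat k k" "B \<in> carrier_mat k k" "i < k" "j < k"
  shows "row A i \<bullet> col B j = (\<Sum>l<k. A$$(i,l) * B$$(l,j))"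
  using assms unfolding scalar_prod_def by (simp add: atLeast0LessThan)

lemma mult_idx: assumes "A \<in> carrier_mat k k" "B \<in> carrier_mat k k" "i < k" "j < k"
  shows "(A * B) $$ (i,j) = (\<Sum>l<k. A$$(i,l) * B$$(l,j))"
  using assms rowcol[OF assms] by simp

lemma rowv: assumes "A \<in> carrier_mat k k" "v \<in> carrier_vec k" "i < k"
  shows "row A i \<bullet> v = (\<Sum>l<k. A$$(i,l) * v$l)"
  using assms unfolding scalar_prod_def by (simp add: atLeast0LessThan)

lemma mv_idx: assumes "A \<in> carrier_mat k k" "v \<in> carrier_vec k" "i < k"
  shows "(A *\<^sub>v v) $ i = (\<Sum>l<k. A$$(i,l) * v$l)"
  using assms rowv[OF assms] by simp

lemma adj_mult_idx: assumes "A \<in> carrier_mat k k" "B \<in> carrier_mat k k" "i < k" "j < k"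
  shows "(mat_adjoint A * B) $$ (i,j) = (\<Sum>l<k. cnj (A$$(l,i)) * B$$(l,j))"
  using assms mult_idx[OF adj_carrier[OF assms(1)] assms(2-4)]
  by (simp add: adj_idx)

lemma hs_trace: assumes "A \<in> carrier_mat k k" "B \<in> carrier_mat k k"
  shows "mat_trace (mat_adjoint A * B) = hs k A B"
proof -
  have "mat_trace (mat_adjoint A * B) = (\<Sum>i<k. (mat_adjoint A * B) $$ (i,i))"
    unfolding mat_trace_def using assms adj_carrier[OF assms(1)] by simp
  also have "\<dots> = (\<Sum>i<k. \<Sum>l<k. cnj (A$$(l,i)) * B$$(l,i))"
    using adj_mult_idx[OF assms] by simp
  also have "\<dots> = hs k A B" unfolding hs_def by (rule sum.swap)
  finally show ?thesis .
qed

lemma qf_vec: assumes "A \<in> carrier_mat k k" "v \<in> carrier_vec k"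
  shows "conjugate v \<bullet> (A *\<^sub>v v) = qf k A (\<lambda>i. v $ i)"
proof -
  have "conjugate v \<bullet> (A *\<^sub>v v) = (\<Sum>i<k. cnj (v$i) * (\<Sum>j<k. A$$(i,j) * v$j))"
    using assms mv_idx[OF assms] unfolding scalar_prod_def[of "conjugate v"] by (simp add: atLeast0LessThan)
  also have "\<dots> = qf k A (\<lambda>i. v $ i)" unfolding qf_def
    by (simp add: sum_distrib_left mult.assoc)
  finally show ?thesis .
qed

lemma cge0: "((z::complex) \<in> \<real> \<and> 0 \<le> Re z) \<longleftrightarrow> 0 \<le> z"
  by (auto simp: less_eq_complex_def complex_is_Real_iff)

definition psdF :: "nat \<Rightarrow> complex mat \<Rightarrow> bool" where
  "psdF k A \<longleftrightarrow> A \<in> carrier_mat k k \<and> (\<forall>i<k. \<forall>j<k. A$$(j,i) = cnj (A$$(i,j))) \<and> (\<forall>f. 0 \<le> qf k A f)"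

lemma herm_iff: assumes "A \<in> carrier_mat k k"
  shows "mat_adjoint A = A \<longleftrightarrow> (\<forall>i<k. \<forall>j<k. A$$(j,i) = cnj (A$$(i,j)))"
proof
  assume e: "mat_adjoint A = A"
  show "\<forall>i<k. \<forall>j<k. A$$(j,i) = cnj (A$$(i,j))"
  proof (intro allI impI)
    fix i j assume "i < k" "j < k"
    then have "mat_adjoint A $$ (j,i) = cnj (A $$ (i,j))" using adj_idx[OF assms] by simp
    then show "A$$(j,i) = cnj (A$$(i,j))" unfolding e .
  qed
next
  assume h: "\<forall>i<k. \<forall>j<k. A$$(j,i) = cnj (A$$(i,j))"
  have c: "mat_adjoint A \<in> carrier_mat k k" by (rule adj_carrier[OF assms])
  show "mat_adjoint A = A"
  proof (rule eq_matI)
    fix i j assume ij: "i < dim_row A" "j < dim_col A"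
    then have "i < k" "j < k" using assms by auto
    then have "mat_adjoint A $$ (i, j) = cnj (A $$ (j, i))" using adj_idx[OF assms] by simp
    also have "\<dots> = A $$ (i, j)" using h \<open>i < k\<close> \<open>j < k\<close> by (metis complex_cnj_cnj)
    finally show "mat_adjoint A $$ (i, j) = A $$ (i, j)" .
  qed (use assms c in auto)
qed

lemma psd_iff: "psd_mat k A \<longleftrightarrow> psdF k A"
proof
  assume a: "psd_mat k A"
  hence c: "A \<in> carrier_mat k k" unfolding psd_mat_def by auto
  have h: "mat_adjoint A = A" using a unfolding psd_mat_def by auto
  have q: "0 \<le> qf k A f" for f
  proof -
    have v: "vec k f \<in> carrier_vec k" by simp
    have "qf k A f = qf k A (\<lambda>i. vec k f $ i)" unfolding qf_def by simp
    also have "\<dots> = conjugate (vec k f) \<bullet> (A *\<^sub>v vec k f)" using qf_vec[OF c v] by simp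
    finally have e: "qf k A f = conjugate (vec k f) \<bullet> (A *\<^sub>v vec k f)" .
    have "conjugate (vec k f) \<bullet> (A *\<^sub>v vec k f) \<in> \<real> \<and> 0 \<le> Re (conjugate (vec k f) \<bullet> (A *\<^sub>v vec k f))"
      using a v unfolding psd_mat_def by blast
    then show ?thesis unfolding e cge0 .
  qed
  show "psdF k A" unfolding psdF_def using c q h herm_iff[OF c] by blast
next
  assume a: "psdF k A"
  hence c: "A \<in> carrier_mat k k" unfolding psdF_def by auto
  have h: "mat_adjoint A = A" using a herm_iff[OF c] unfolding psdF_def by blast
  have q: "conjugate v \<bullet> (A *\<^sub>v v) \<in> \<real> \<and> 0 \<le> Re (conjugate v \<bullet> (A *\<^sub>v v))" 
    if v: "v \<in> carrier_vec k" for v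
    unfolding qf_vec[OF c v] cge0 using a unfolding psdF_def by blast
  show "psd_mat k A" unfolding psd_mat_def using c h q by blast
qed

lemma real_lin0: fixes r b :: real assumes "\<forall>t. 0 \<le> b + t * r" shows "r = 0"
proof (rule ccontr)
  assume r: "r \<noteq> 0"
  define t where "t = - (\<bar>b\<bar> + 1) / r"
  have "t * r = - (\<bar>b\<bar> + 1)" unfolding t_def using r by simp
  then have "b + t * r < 0" by linarith
  with assms show False by (metis not_le)
qed

lemma real_quad0: fixes r s :: real assumes "\<forall>t. 0 \<le> t * r + t^2 * s" shows "r = 0"
proof (rule ccontr)
  assume r: "r \<noteq> 0"
  define S where "S = \<bar>s\<bar> + 1"
  have S: "S > 0" "s \<le> S - 1" unfolding S_def by auto
  define t where "t = - r / S"
  have "t * r + t^2 * s \<le> t * r + t^2 * (S - 1)"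
    using S(2) by (intro add_left_mono mult_left_mono) auto
  also have "\<dots> = - ((r^2) / (S^2))" unfolding t_def using S
    by (simp add: field_simps power2_eq_square)
  also have "\<dots> < 0" using r S by simp
  finally show False using assms by (metis not_le)
qed

lemma cplx_lin0: fixes a b :: complex assumes "\<forall>t::real. 0 \<le> b + of_real t * a" shows "a = 0"
proof -
  have im: "Im b + t * Im a = 0" for t using assms[rule_format, of t] by (simp add: less_eq_complex_def)
  have "Im a = 0" using im[of 0] im[of 1] by simp
  moreover have "Re a = 0"
    by (rule real_lin0[of "Re b"]) (use assms in \<open>auto simp: less_eq_complex_def\<close>)
  ultimately show ?thesis by (simp add: complex_eq_iff)
qed

lemma cplx_quad0: fixes a c :: complex assumes "\<forall>t::real. 0 \<le> of_real t * a + (of_real t)^2 * c" shows "a = 0"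
proof -
  have im: "t * Im a + t^2 * Im c = 0" for t using assms[rule_format, of t] 
    by (simp add: less_eq_complex_def power2_eq_square)
  have "Im a = 0" using im[of 1] im[of "-1"] by simp
  moreover have "Re a = 0"
    by (rule real_quad0[of _ "Re c"]) (use assms in \<open>auto simp: less_eq_complex_def power2_eq_square\<close>)
  ultimately show ?thesis by (simp add: complex_eq_iff)
qed

lemma qf_add: assumes "A \<in> carrier_mat k k" "B \<in> carrier_mat k k"
  shows "qf k (A + B) f = qf k A f + qf k B f"
proof -
  have "qf k (A + B) f = (\<Sum>i<k. \<Sum>j<k. cnj (f i) * A$$(i,j) * f j + cnj (f i) * B$$(i,j) * f j)"
    unfolding qf_def using assms by (intro sum.cong refl) (simp add: algebra_simps)
  then show ?thesis unfolding qf_def by (simp add: sum.distrib)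
qed

lemma qf_smult: assumes "A \<in> carrier_mat k k"
  shows "qf k (c \<cdot>\<^sub>m A) f = c * qf k A f"
proof -
  have "qf k (c \<cdot>\<^sub>m A) f = (\<Sum>i<k. \<Sum>j<k. c * (cnj (f i) * A$$(i,j) * f j))"
    unfolding qf_def using assms by (intro sum.cong refl) (simp add: algebra_simps)
  then show ?thesis unfolding qf_def by (simp add: sum_distrib_left)
qed

lemma qf_expand: 
  "qf k M (\<lambda>i. f i + c * g i) = qf k M f + cnj c * (\<Sum>i<k. cnj (g i) * (\<Sum>j<k. M$$(i,j) * f j))
     + c * (\<Sum>i<k. cnj (f i) * (\<Sum>j<k. M$$(i,j) * g j)) + cnj c * c * qf k M g"
proof -
  have "qf k M (\<lambda>i. f i + c * g i) = (\<Sum>i<k. \<Sum>j<k. 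
      cnj (f i) * M$$(i,j) * f j + cnj c * (cnj (g i) * (M$$(i,j) * f j)) + c * (cnj (f i) * (M$$(i,j) * g j))
      + cnj c * c * (cnj (g i) * M$$(i,j) * g j))"
    unfolding qf_def by (intro sum.cong refl) (simp add: algebra_simps)
  also have "\<dots> = qf k M f + cnj c * (\<Sum>i<k. cnj (g i) * (\<Sum>j<k. M$$(i,j) * f j))
     + c * (\<Sum>i<k. cnj (f i) * (\<Sum>j<k. M$$(i,j) * g j)) + cnj c * c * qf k M g"
    unfolding qf_def by (simp only: sum.distrib sum_distrib_left[symmetric])
  finally show ?thesis .
qed

lemma gram_psd: assumes W: "W \<in> carrier_mat k k"
  shows "psdF k (mat_adjoint W * W)"
proof -
  have c: "mat_adjoint W * W \<in> carrier_mat k k" using adj_carrier[OF W] W by simp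
  have idx: "(mat_adjoint W * W) $$ (i,j) = (\<Sum>l<k. cnj (W$$(l,i)) * W$$(l,j))" if "i<k" "j<k" for i j
    using adj_mult_idx[OF W W that] .
  have herm: "\<forall>i<k. \<forall>j<k. (mat_adjoint W * W)$$(j,i) = cnj ((mat_adjoint W * W)$$(i,j))"
  proof (intro allI impI)
    fix i j assume ij: "i < k" "j < k"
    have "cnj ((mat_adjoint W * W)$$(i,j)) = (\<Sum>l<k. cnj (cnj (W$$(l,i)) * W$$(l,j)))"
      unfolding idx[OF ij] by (rule cnj_sum)
    also have "\<dots> = (\<Sum>l<k. cnj (W$$(l,j)) * W$$(l,i))" by (simp add: mult.commute)
    also have "\<dots> = (mat_adjoint W * W)$$(j,i)" using idx ij by simp
    finally show "(mat_adjoint W * W)$$(j,i) = cnj ((mat_adjoint W * W)$$(i,j))" by simp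
  qed
  have q: "0 \<le> qf k (mat_adjoint W * W) f" for f
  proof -
    define g where "g l = (\<Sum>j<k. W$$(l,j) * f j)" for l
    have "qf k (mat_adjoint W * W) f = (\<Sum>i<k. \<Sum>j<k. \<Sum>l<k. cnj (W$$(l,i) * f i) * (W$$(l,j) * f j))"
      unfolding qf_def 
    proof (intro sum.cong refl)
      fix i j assume "i \<in> {..<k}" "j \<in> {..<k}"
      then have "(mat_adjoint W * W) $$ (i,j) = (\<Sum>l<k. cnj (W$$(l,i)) * W$$(l,j))" using idx by simp
      then show "cnj (f i) * (mat_adjoint W * W) $$ (i, j) * f j = (\<Sum>l<k. cnj (W$$(l,i) * f i) * (W$$(l,j) * f j))"
        by (simp add: sum_distrib_left sum_distrib_right mult.commute mult.left_commute)
    qed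
    also have "\<dots> = (\<Sum>i<k. \<Sum>l<k. \<Sum>j<k. cnj (W$$(l,i) * f i) * (W$$(l,j) * f j))"
      by (intro sum.cong refl sum.swap)
    also have "\<dots> = (\<Sum>l<k. \<Sum>i<k. \<Sum>j<k. cnj (W$$(l,i) * f i) * (W$$(l,j) * f j))"
      by (rule sum.swap)
    also have "\<dots> = (\<Sum>l<k. cnj (g l) * g l)"
      unfolding g_def cnj_sum sum_distrib_right sum_distrib_left by (rule sum.cong[OF refl], rule sum.swap)
    finally have e: "qf k (mat_adjoint W * W) f = (\<Sum>l<k. cnj (g l) * g l)" .
    have "0 \<le> cnj (g l) * g l" for l
      by (simp add: less_eq_complex_def)
    then show ?thesis unfolding e by (intro sum_nonneg) auto
  qed
  show ?thesis unfolding psdF_def using c herm q by blast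
qed

lemma cnj_mult_self: "cnj z * z = of_real ((cmod z)^2)"
  by (metis complex_norm_square mult.commute of_real_power)

lemma sum_delta1: fixes h :: "nat \<Rightarrow> complex" assumes "b < k"
  shows "(\<Sum>j<k. h j * (if j = b then 1 else 0)) = h b"
proof -
  have "(\<Sum>j<k. h j * (if j = b then 1 else 0)) = (\<Sum>j<k. if j = b then h j else 0)"
    by (rule sum.cong) auto
  then show ?thesis using assms by simp
qed

lemma sum_delta2: fixes h :: "nat \<Rightarrow> complex" assumes "b < k"
  shows "(\<Sum>j<k. cnj (if j = b then 1 else 0) * h j) = h b"
proof -
  have "(\<Sum>j<k. cnj (if j = b then 1 else 0) * h j) = (\<Sum>j<k. if j = b then h j else 0)"
    by (rule sum.cong) auto
  then show ?thesis using assms by simp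
qed

lemma psd_vec: assumes M: "psdF k M" and q: "qf k M v = 0"
  shows "\<forall>i<k. (\<Sum>j<k. M$$(i,j) * v j) = 0"
proof -
  define w where "w i = (\<Sum>j<k. M$$(i,j) * v j)" for i
  have herm: "\<And>i j. i<k \<Longrightarrow> j<k \<Longrightarrow> M$$(j,i) = cnj (M$$(i,j))" using M unfolding psdF_def by blast
  define X where "X = (\<Sum>i<k. cnj (w i) * w i)"
  have Y: "(\<Sum>i<k. cnj (v i) * (\<Sum>j<k. M$$(i,j) * w j)) = X"
  proof -
    have "(\<Sum>i<k. cnj (v i) * (\<Sum>j<k. M$$(i,j) * w j)) = (\<Sum>i<k. \<Sum>j<k. cnj (v i) * M$$(i,j) * w j)"
      by (simp add: sum_distrib_left mult.assoc)
    also have "\<dots> = (\<Sum>j<k. \<Sum>i<k. cnj (v i) * M$$(i,j) * w j)" by (rule sum.swap)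
    also have "\<dots> = (\<Sum>j<k. cnj (w j) * w j)"
    proof (rule sum.cong[OF refl])
      fix j assume j: "j \<in> {..<k}"
      have "cnj (w j) = (\<Sum>i<k. cnj (v i) * M$$(i,j))"
        unfolding w_def cnj_sum
      proof (rule sum.cong[OF refl])
        fix i assume i: "i \<in> {..<k}"
        have "cnj (M$$(j,i)) = M$$(i,j)" using herm[of i j] i j by simp
        then show "cnj (M$$(j,i) * v i) = cnj (v i) * M$$(i,j)" by (simp add: mult.commute)
      qed
      then show "(\<Sum>i<k. cnj (v i) * M$$(i,j) * w j) = cnj (w j) * w j"
        by (simp add: sum_distrib_right)
    qed
    finally show ?thesis unfolding X_def .
  qed
  have X0: "X = 0"
  proof -
    have "0 \<le> of_real t * (2 * X) + (of_real t)^2 * qf k M w" for t :: real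
    proof -
      have "0 \<le> qf k M (\<lambda>i. v i + of_real t * w i)" using M unfolding psdF_def by blast
      also have "qf k M (\<lambda>i. v i + of_real t * w i) = of_real t * (2 * X) + (of_real t)^2 * qf k M w"
      proof -
        have w: "(\<Sum>i<k. cnj (w i) * (\<Sum>j<k. M$$(i,j) * v j)) = X" unfolding X_def w_def ..
        show ?thesis unfolding qf_expand q Y w by (simp add: power2_eq_square algebra_simps)
      qed
      finally show ?thesis .
    qed
    then have "2 * X = 0" by (intro cplx_quad0[of _ "qf k M w"]) auto
    then show ?thesis by simp
  qed
  have "\<forall>i\<in>{..<k}. (cmod (w i))^2 = 0"
  proof -
    have "of_real (\<Sum>i<k. (cmod (w i))^2) = X" unfolding X_def cnj_mult_self by simp
    then have "(\<Sum>i<k. (cmod (w i))^2) = 0" using X0 of_real_eq_0_iff by metis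
    then show ?thesis by (subst (asm) sum_nonneg_eq_0_iff) auto
  qed
  then show ?thesis unfolding w_def by simp
qed

lemma polar: assumes M: "M \<in> carrier_mat k k" and q: "\<forall>f. qf k M f = 0"
  shows "M = 0\<^sub>m k k"
proof (rule eq_matI)
  fix a b assume "a < dim_row (0\<^sub>m k k :: complex mat)" "b < dim_col (0\<^sub>m k k :: complex mat)"
  then have ab: "a < k" "b < k" by auto
  define f where "f x = (if x = b then 1 else 0 :: complex)" for x
  define g where "g x = (if x = a then 1 else 0 :: complex)" for x
  have X: "(\<Sum>i<k. cnj (g i) * (\<Sum>j<k. M$$(i,j) * f j)) = M$$(a,b)"
    unfolding f_def g_def using ab by (simp add: sum_delta1 sum_delta2)
  have Y: "(\<Sum>i<k. cnj (f i) * (\<Sum>j<k. M$$(i,j) * g j)) = M$$(b,a)"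
    unfolding f_def g_def using ab by (simp add: sum_delta1 sum_delta2)
  have e: "cnj c * M$$(a,b) + c * M$$(b,a) = 0" for c
  proof -
    have "qf k M (\<lambda>i. f i + c * g i) = 0" using q by blast
    then show ?thesis unfolding qf_expand X Y using q by simp
  qed
  have "M$$(a,b) + M$$(b,a) = 0" using e[of 1] by simp
  then have y: "M$$(b,a) = - M$$(a,b)" by (simp add: eq_neg_iff_add_eq_0 add.commute)
  have "- \<i> * M$$(a,b) + \<i> * M$$(b,a) = 0" using e[of \<i>] by simp
  then have "-(2*\<i>) * M$$(a,b) = 0" unfolding y by (simp add: algebra_simps)
  then have "M$$(a,b) = 0" by simp
  then show "M $$ (a, b) = 0\<^sub>m k k $$ (a, b)" using ab by simp
qed (use M in auto)

lemma lin_carrier: "lin_map n m phi \<Longrightarrow> A \<in> carrier_mat n n \<Longrightarrow> phi A \<in> carrier_mat m m"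
  unfolding lin_map_def by blast
lemma lin_add: "lin_map n m phi \<Longrightarrow> A \<in> carrier_mat n n \<Longrightarrow> B \<in> carrier_mat n n \<Longrightarrow> phi (A + B) = phi A + phi B"
  unfolding lin_map_def by blast
lemma lin_smult: "lin_map n m phi \<Longrightarrow> A \<in> carrier_mat n n \<Longrightarrow> phi (c \<cdot>\<^sub>m A) = c \<cdot>\<^sub>m phi A"
  unfolding lin_map_def by blast

lemma one_psd: "psdF k (1\<^sub>m k)"
proof -
  have q: "0 \<le> qf k (1\<^sub>m k) f" for f
  proof -
    have "qf k (1\<^sub>m k) f = (\<Sum>i<k. cnj (f i) * f i)"
      unfolding qf_def
    proof (rule sum.cong[OF refl])
      fix i assume i: "i \<in> {..<k}"
      have "(\<Sum>j<k. cnj (f i) * 1\<^sub>m k $$ (i, j) * f j) = (\<Sum>j<k. if j = i then cnj (f i) * f j else 0)"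
      proof (rule sum.cong[OF refl])
        fix j assume j: "j \<in> {..<k}"
        show "cnj (f i) * 1\<^sub>m k $$ (i, j) * f j = (if j = i then cnj (f i) * f j else 0)"
          using i j by (cases "j = i") simp_all
      qed
      also have "\<dots> = cnj (f i) * f i" using i by (simp only: sum.delta finite_lessThan) simp
      finally show "(\<Sum>j<k. cnj (f i) * 1\<^sub>m k $$ (i, j) * f j) = cnj (f i) * f i" .
    qed
    also have "0 \<le> \<dots>" by (intro sum_nonneg) (simp add: less_eq_complex_def)
    finally show ?thesis .
  qed
  have c: "(1\<^sub>m k :: complex mat) \<in> carrier_mat k k" by simp
  have h: "\<forall>i<k. \<forall>j<k. (1\<^sub>m k :: complex mat)$$(j,i) = cnj ((1\<^sub>m k :: complex mat)$$(i,j))"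
  proof (intro allI impI)
    fix i j assume "i < k" "j < k"
    then show "(1\<^sub>m k :: complex mat)$$(j,i) = cnj ((1\<^sub>m k :: complex mat)$$(i,j))"
      by (cases "i = j") simp_all
  qed
  show ?thesis unfolding psdF_def using c h q by blast
qed

lemma E_id: assumes W: "W \<in> carrier_mat n n"
  shows "mat_adjoint (W + c \<cdot>\<^sub>m 1\<^sub>m n) * (W + c \<cdot>\<^sub>m 1\<^sub>m n) =
    mat_adjoint W * W + c \<cdot>\<^sub>m mat_adjoint W + cnj c \<cdot>\<^sub>m W + (cnj c * c) \<cdot>\<^sub>m 1\<^sub>m n"
  (is "?L = ?R")
proof -
  have Wc: "W + c \<cdot>\<^sub>m 1\<^sub>m n \<in> carrier_mat n n" using W by simp
  have aW: "mat_adjoint W \<in> carrier_mat n n" using adj_carrier[OF W] .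
  have Lc: "?L \<in> carrier_mat n n" using adj_carrier[OF Wc] Wc by (rule mult_carrier_mat)
  have Rc: "?R \<in> carrier_mat n n" using aW W by simp
  show ?thesis
  proof (rule eq_matI)
    fix i j assume "i < dim_row ?R" "j < dim_col ?R"
    then have ij: "i < n" "j < n" using Rc by auto
    have e1: "?L $$ (i,j) = (\<Sum>l<n. cnj ((W + c \<cdot>\<^sub>m 1\<^sub>m n)$$(l,i)) * (W + c \<cdot>\<^sub>m 1\<^sub>m n)$$(l,j))"
      by (rule adj_mult_idx[OF Wc Wc ij])
    also have "\<dots> = (\<Sum>l<n. cnj (W$$(l,i)) * W$$(l,j) + c * (if l = j then cnj (W$$(l,i)) else 0)
        + cnj c * (if l = i then W$$(l,j) else 0) + cnj c * c * (if l = i then (if i = j then 1 else 0) else 0))"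
    proof (rule sum.cong[OF refl])
      fix l assume l: "l \<in> {..<n}"
      then show "cnj ((W + c \<cdot>\<^sub>m 1\<^sub>m n)$$(l,i)) * (W + c \<cdot>\<^sub>m 1\<^sub>m n)$$(l,j) =
        cnj (W$$(l,i)) * W$$(l,j) + c * (if l = j then cnj (W$$(l,i)) else 0)
        + cnj c * (if l = i then W$$(l,j) else 0) + cnj c * c * (if l = i then (if i = j then 1 else 0) else 0)"
        using W ij by (auto simp: algebra_simps)
    qed
    also have "\<dots> = (\<Sum>l<n. cnj (W$$(l,i)) * W$$(l,j)) + c * cnj (W$$(j,i)) + cnj c * W$$(i,j)
        + cnj c * c * (if i = j then 1 else 0)"
    proof -
      have s1: "(\<Sum>l<n. c * (if l = j then cnj (W$$(l,i)) else 0)) = c * cnj (W$$(j,i))"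
        unfolding sum_distrib_left[symmetric] using ij by simp
      have s2: "(\<Sum>l<n. cnj c * (if l = i then W$$(l,j) else 0)) = cnj c * W$$(i,j)"
        unfolding sum_distrib_left[symmetric] using ij by simp
      have s3: "(\<Sum>l<n. cnj c * c * (if l = i then (if i = j then 1 else 0) else 0)) = cnj c * c * (if i = j then 1 else 0)"
        unfolding sum_distrib_left[symmetric] using ij by (cases "i = j") simp_all
      show ?thesis by (simp only: sum.distrib s1 s2 s3)
    qed
    also have "\<dots> = ?R $$ (i,j)"
      using W aW ij by (simp add: adj_mult_idx[OF W W ij] adj_idx[OF W])
    finally show "?L $$ (i,j) = ?R $$ (i,j)" .
  qed (use Lc Rc in \<open>simp_all only: carrier_matD\<close>)
qed

lemma phiE: assumes lin: "lin_map n m phi" and W: "W \<in> carrier_mat n n"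
  shows "phi (mat_adjoint (W + c \<cdot>\<^sub>m 1\<^sub>m n) * (W + c \<cdot>\<^sub>m 1\<^sub>m n)) =
    phi (mat_adjoint W * W) + c \<cdot>\<^sub>m phi (mat_adjoint W) + cnj c \<cdot>\<^sub>m phi W + (cnj c * c) \<cdot>\<^sub>m phi (1\<^sub>m n)"
proof -
  have aW: "mat_adjoint W \<in> carrier_mat n n" using adj_carrier[OF W] .
  have G: "mat_adjoint W * W \<in> carrier_mat n n" using aW W by simp
  show ?thesis unfolding E_id[OF W]
    using G aW W by (simp add: lin_add[OF lin] lin_smult[OF lin])
qed

definition rv :: "nat \<Rightarrow> complex mat \<Rightarrow> (nat \<Rightarrow> complex) \<Rightarrow> nat \<Rightarrow> complex" where
  "rv k M v i = (\<Sum>j<k. M$$(i,j) * v j)"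
definition rva :: "nat \<Rightarrow> complex mat \<Rightarrow> (nat \<Rightarrow> complex) \<Rightarrow> nat \<Rightarrow> complex" where
  "rva k M v i = (\<Sum>j<k. cnj (M$$(j,i)) * v j)"

lemma rv_add: assumes "A \<in> carrier_mat k k" "B \<in> carrier_mat k k" "i < k"
  shows "rv k (A + B) v i = rv k A v i + rv k B v i"
proof -
  have "rv k (A + B) v i = (\<Sum>j<k. A$$(i,j) * v j + B$$(i,j) * v j)"
    unfolding rv_def using assms by (intro sum.cong refl) (simp add: algebra_simps)
  then show ?thesis unfolding rv_def by (simp add: sum.distrib)
qed

lemma rv_smult: assumes "A \<in> carrier_mat k k" "i < k"
  shows "rv k (c \<cdot>\<^sub>m A) v i = c * rv k A v i"
proof -
  have "rv k (c \<cdot>\<^sub>m A) v i = (\<Sum>j<k. c * (A$$(i,j) * v j))"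
    unfolding rv_def using assms by (intro sum.cong refl) (simp add: algebra_simps)
  then show ?thesis unfolding rv_def by (simp add: sum_distrib_left)
qed

lemma rva_add: assumes "A \<in> carrier_mat k k" "B \<in> carrier_mat k k" "i < k"
  shows "rva k (A + B) v i = rva k A v i + rva k B v i"
proof -
  have "rva k (A + B) v i = (\<Sum>j<k. cnj (A$$(j,i)) * v j + cnj (B$$(j,i)) * v j)"
    unfolding rva_def using assms by (intro sum.cong refl) (simp add: algebra_simps)
  then show ?thesis unfolding rva_def by (simp add: sum.distrib)
qed

lemma rva_smult: assumes "A \<in> carrier_mat k k" "i < k"
  shows "rva k (c \<cdot>\<^sub>m A) v i = cnj c * rva k A v i"
proof -
  have "rva k (c \<cdot>\<^sub>m A) v i = (\<Sum>j<k. cnj c * (cnj (A$$(j,i)) * v j))"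
    unfolding rva_def using assms by (intro sum.cong refl) (simp add: algebra_simps)
  then show ?thesis unfolding rva_def by (simp add: sum_distrib_left)
qed

lemma lin4: assumes "A1 \<in> carrier_mat k k" "A2 \<in> carrier_mat k k" "A3 \<in> carrier_mat k k" "A4 \<in> carrier_mat k k" "i < k"
  shows "rv k (A1 + c1 \<cdot>\<^sub>m A2 + c2 \<cdot>\<^sub>m A3 + c3 \<cdot>\<^sub>m A4) v i = rv k A1 v i + c1 * rv k A2 v i + c2 * rv k A3 v i + c3 * rv k A4 v i"
    "rva k (A1 + c1 \<cdot>\<^sub>m A2 + c2 \<cdot>\<^sub>m A3 + c3 \<cdot>\<^sub>m A4) v i = rva k A1 v i + cnj c1 * rva k A2 v i + cnj c2 * rva k A3 v i + cnj c3 * rva k A4 v i"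
    "qf k (A1 + c1 \<cdot>\<^sub>m A2 + c2 \<cdot>\<^sub>m A3 + c3 \<cdot>\<^sub>m A4) v = qf k A1 v + c1 * qf k A2 v + c2 * qf k A3 v + c3 * qf k A4 v"
  using assms by (simp_all add: rv_add rv_smult rva_add rva_smult qf_add qf_smult)

lemma qf4: assumes "A1 \<in> carrier_mat k k" "A2 \<in> carrier_mat k k" "A3 \<in> carrier_mat k k" "A4 \<in> carrier_mat k k"
  shows "qf k (A1 + c1 \<cdot>\<^sub>m A2 + c2 \<cdot>\<^sub>m A3 + c3 \<cdot>\<^sub>m A4) v = qf k A1 v + c1 * qf k A2 v + c2 * qf k A3 v + c3 * qf k A4 v"
  using assms by (simp add: qf_add qf_smult)

lemma psd_herm: "psdF k M \<Longrightarrow> i < k \<Longrightarrow> j < k \<Longrightarrow> M$$(j,i) = cnj (M$$(i,j))"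
  unfolding psdF_def by blast

lemma rva_psd: assumes "psdF k M" "i < k" shows "rva k M v i = rv k M v i"
  unfolding rva_def rv_def
proof (rule sum.cong[OF refl])
  fix j assume "j \<in> {..<k}"
  then have "M$$(j,i) = cnj (M$$(i,j))" using psd_herm[OF assms(1) assms(2)] by simp
  then show "cnj (M$$(j,i)) * v j = M$$(i,j) * v j" by simp
qed

lemma psd_rv0: assumes "psdF k M" "qf k M v = 0" "i < k" shows "rv k M v i = 0"
  using psd_vec[OF assms(1,2)] assms(3) unfolding rv_def by blast

lemma xy0: fixes x y :: complex assumes "x + y = 0" "\<i> * x - \<i> * y = 0" shows "y = 0"
proof -
  from assms(1) have x: "x = - y" by (simp add: eq_neg_iff_add_eq_0)
  from assms(2) have "-(2 * \<i>) * y = 0" unfolding x by (simp add: algebra_simps)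
  then show ?thesis by simp
qed

lemma xy0': fixes x y :: complex assumes "x + y = 0" "- \<i> * x + \<i> * y = 0" shows "y = 0"
  using xy0[of x y] assms by (simp add: algebra_simps)

lemma pos_psd: assumes "positive_map n m phi" "psdF n A" shows "psdF m (phi A)"
  using assms unfolding positive_map_def psd_iff by blast

lemma factA: assumes lin: "lin_map n m phi" and pos: "positive_map n m phi"
  and q1: "qf m (phi (1\<^sub>m n)) v = 0"
  shows "\<forall>B\<in>carrier_mat n n. \<forall>i<m. rv m (phi B) v i = 0 \<and> rva m (phi B) v i = 0"
proof -
  let ?P1 = "phi (1\<^sub>m n)"
  have one: "(1\<^sub>m n :: complex mat) \<in> carrier_mat n n" by simp
  have P1: "psdF m ?P1" using pos_psd[OF pos one_psd] .
  have P1c: "?P1 \<in> carrier_mat m m" using lin_carrier[OF lin one] .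
  have gpsd: "psdF m (phi (mat_adjoint W * W))" if "W \<in> carrier_mat n n" for W
    using pos_psd[OF pos gram_psd[OF that]] .
  have fE: "qf m (phi (mat_adjoint (W + c \<cdot>\<^sub>m 1\<^sub>m n) * (W + c \<cdot>\<^sub>m 1\<^sub>m n))) v =
     qf m (phi (mat_adjoint W * W)) v + c * qf m (phi (mat_adjoint W)) v + cnj c * qf m (phi W) v"
    and rE: "i < m \<Longrightarrow> rv m (phi (mat_adjoint (W + c \<cdot>\<^sub>m 1\<^sub>m n) * (W + c \<cdot>\<^sub>m 1\<^sub>m n))) v i =
     rv m (phi (mat_adjoint W * W)) v i + c * rv m (phi (mat_adjoint W)) v i + cnj c * rv m (phi W) v i
       + (cnj c * c) * rv m ?P1 v i"
    and raE: "i < m \<Longrightarrow> rva m (phi (mat_adjoint (W + c \<cdot>\<^sub>m 1\<^sub>m n) * (W + c \<cdot>\<^sub>m 1\<^sub>m n))) v i =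
     rva m (phi (mat_adjoint W * W)) v i + cnj c * rva m (phi (mat_adjoint W)) v i + c * rva m (phi W) v i
       + cnj (cnj c * c) * rva m ?P1 v i"
    if W: "W \<in> carrier_mat n n" for W c i
  proof -
    have aW: "mat_adjoint W \<in> carrier_mat n n" using adj_carrier[OF W] .
    have G: "mat_adjoint W * W \<in> carrier_mat n n" using aW W by simp
    note cs = lin_carrier[OF lin G] lin_carrier[OF lin aW] lin_carrier[OF lin W] P1c
    show "qf m (phi (mat_adjoint (W + c \<cdot>\<^sub>m 1\<^sub>m n) * (W + c \<cdot>\<^sub>m 1\<^sub>m n))) v =
     qf m (phi (mat_adjoint W * W)) v + c * qf m (phi (mat_adjoint W)) v + cnj c * qf m (phi W) v"
      unfolding phiE[OF lin W] qf4[OF cs] q1 by simp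
    assume i: "i < m"
    show "rv m (phi (mat_adjoint (W + c \<cdot>\<^sub>m 1\<^sub>m n) * (W + c \<cdot>\<^sub>m 1\<^sub>m n))) v i =
     rv m (phi (mat_adjoint W * W)) v i + c * rv m (phi (mat_adjoint W)) v i + cnj c * rv m (phi W) v i
       + (cnj c * c) * rv m ?P1 v i"
      unfolding phiE[OF lin W] lin4(1)[OF cs i] ..
    show "rva m (phi (mat_adjoint (W + c \<cdot>\<^sub>m 1\<^sub>m n) * (W + c \<cdot>\<^sub>m 1\<^sub>m n))) v i =
     rva m (phi (mat_adjoint W * W)) v i + cnj c * rva m (phi (mat_adjoint W)) v i + c * rva m (phi W) v i
       + cnj (cnj c * c) * rva m ?P1 v i"
      unfolding phiE[OF lin W] lin4(2)[OF cs i] by simp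
  qed
  have fW: "qf m (phi W) v = 0" if W: "W \<in> carrier_mat n n" for W
  proof -
    have aW: "mat_adjoint W \<in> carrier_mat n n" using adj_carrier[OF W] .
    have Wc: "W + c \<cdot>\<^sub>m 1\<^sub>m n \<in> carrier_mat n n" for c using W by simp
    have nn: "0 \<le> qf m (phi (mat_adjoint (W + c \<cdot>\<^sub>m 1\<^sub>m n) * (W + c \<cdot>\<^sub>m 1\<^sub>m n))) v" for c
      using gpsd[OF Wc[of c]] unfolding psdF_def by blast
    have "0 \<le> qf m (phi (mat_adjoint W * W)) v + of_real t * (qf m (phi (mat_adjoint W)) v + qf m (phi W) v)" for t
      using nn[of "of_real t"] unfolding fE[OF W] by (simp add: algebra_simps)
    then have s1: "qf m (phi (mat_adjoint W)) v + qf m (phi W) v = 0" by (intro cplx_lin0) auto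
    have "0 \<le> qf m (phi (mat_adjoint W * W)) v + of_real t * (\<i> * qf m (phi (mat_adjoint W)) v - \<i> * qf m (phi W) v)" for t
      using nn[of "of_real t * \<i>"] unfolding fE[OF W] by (simp add: algebra_simps)
    then have s2: "\<i> * qf m (phi (mat_adjoint W)) v - \<i> * qf m (phi W) v = 0" by (intro cplx_lin0) auto
    show ?thesis using xy0[OF s1 s2] .
  qed
  have rG: "rv m (phi (mat_adjoint W * W)) v i = 0" "rva m (phi (mat_adjoint W * W)) v i = 0"
    if W: "W \<in> carrier_mat n n" and i: "i < m" for W i
  proof -
    have aW: "mat_adjoint W \<in> carrier_mat n n" using adj_carrier[OF W] .
    have G: "mat_adjoint W * W \<in> carrier_mat n n" using aW W by simp
    show "rv m (phi (mat_adjoint W * W)) v i = 0" using psd_rv0[OF gpsd[OF W] fW[OF G] i] .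
    then show "rva m (phi (mat_adjoint W * W)) v i = 0" using rva_psd[OF gpsd[OF W] i] by simp
  qed
  have r1: "rv m ?P1 v i = 0" "rva m ?P1 v i = 0" if i: "i < m" for i
  proof -
    show "rv m ?P1 v i = 0" using psd_rv0[OF P1 q1 i] .
    then show "rva m ?P1 v i = 0" using rva_psd[OF P1 i] by simp
  qed
  show ?thesis
  proof (intro ballI allI impI conjI)
    fix B :: "complex mat" and i assume B: "B \<in> carrier_mat n n" and i: "i < m"
    have Bc: "B + c \<cdot>\<^sub>m 1\<^sub>m n \<in> carrier_mat n n" for c using B by simp
    have e: "c * rv m (phi (mat_adjoint B)) v i + cnj c * rv m (phi B) v i = 0" for c
      using rE[OF B i, of c] rG(1)[OF Bc i] rG(1)[OF B i] r1(1)[OF i] by simp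
    have e1: "rv m (phi (mat_adjoint B)) v i + rv m (phi B) v i = 0" using e[of 1] by simp
    have e2: "\<i> * rv m (phi (mat_adjoint B)) v i - \<i> * rv m (phi B) v i = 0" using e[of \<i>] by simp
    show "rv m (phi B) v i = 0" using xy0[OF e1 e2] .
    have e': "cnj c * rva m (phi (mat_adjoint B)) v i + c * rva m (phi B) v i = 0" for c
      using raE[OF B i, of c] rG(2)[OF Bc i] rG(2)[OF B i] r1(2)[OF i] by simp
    have e1': "rva m (phi (mat_adjoint B)) v i + rva m (phi B) v i = 0" using e'[of 1] by simp
    have e2': "- \<i> * rva m (phi (mat_adjoint B)) v i + \<i> * rva m (phi B) v i = 0" using e'[of \<i>] by simp
    show "rva m (phi B) v i = 0" using xy0'[OF e1' e2'] .
  qed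
qed

lemma qf_e: assumes "j < k" shows "qf k X (\<lambda>x. if x = j then 1 else 0) = X$$(j,j)"
proof -
  have "qf k X (\<lambda>x. if x = j then 1 else 0) = (\<Sum>i<k. if i = j then X$$(j,j) else 0)"
    unfolding qf_def
  proof (rule sum.cong[OF refl])
    fix i assume i: "i \<in> {..<k}"
    have "(\<Sum>l<k. cnj (if i = j then 1 else 0) * X $$ (i, l) * (if l = j then 1 else 0)) =
          (\<Sum>l<k. if l = j then cnj (if i = j then 1 else 0) * X $$ (i, l) else 0)"
      by (rule sum.cong[OF refl]) simp
    also have "\<dots> = cnj (if i = j then 1 else 0) * X $$ (i, j)" using assms by simp
    also have "\<dots> = (if i = j then X$$(j,j) else 0)" by simp
    finally show "(\<Sum>l<k. cnj (if i = j then 1 else 0) * X $$ (i, l) * (if l = j then 1 else 0)) =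
          (if i = j then X$$(j,j) else 0)" .
  qed
  also have "\<dots> = X$$(j,j)" using assms by simp
  finally show ?thesis .
qed

lemma col_zero: assumes X: "psdF k X" and j: "j < k" and z: "X$$(j,j) = 0" and a: "a < k"
  shows "X$$(a,j) = 0" "X$$(j,a) = 0"
proof -
  have "qf k X (\<lambda>x. if x = j then 1 else 0) = 0" using qf_e[OF j] z by simp
  from psd_vec[OF X this] a have "(\<Sum>l<k. X$$(a,l) * (if l = j then 1 else 0)) = 0" by blast
  then show "X$$(a,j) = 0" using sum_delta1[OF j, of "\<lambda>l. X$$(a,l)"] by simp
  then show "X$$(j,a) = 0" using psd_herm[OF X a j] by simp
qed

lemma cnonneg_sum0: fixes a b :: complex assumes "0 \<le> a" "0 \<le> b" "a + b = 0" shows "a = 0" "b = 0"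
  using assms by (auto simp: less_eq_complex_def complex_eq_iff)

lemma diag_nonneg: assumes X: "psdF k X" and j: "j < k" shows "0 \<le> X$$(j,j)"
  using X qf_e[OF j, of X] unfolding psdF_def by metis

lemma schur_step:
  assumes X: "psdF m X" and j0: "j0 < m" and s0: "X$$(j0,j0) \<noteq> 0"
  defines "s \<equiv> X$$(j0,j0)"
  defines "x \<equiv> (\<lambda>l. X$$(l,j0))"
  defines "X' \<equiv> mat m m (\<lambda>(a,b). X$$(a,b) - x a * cnj (x b) / s)"
  shows "psdF m X'" "{j\<in>{..<m}. X'$$(j,j) \<noteq> 0} \<subset> {j\<in>{..<m}. X$$(j,j) \<noteq> 0}"
    "\<And>M. M \<in> carrier_mat m m \<Longrightarrow> hs m X M = hs m X' M + qf m M x / s"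
    "\<And>a b. a < m \<Longrightarrow> b < m \<Longrightarrow> X$$(a,b) = X'$$(a,b) + x a * cnj (x b) / s"
    "\<exists>r>0. s = of_real r"
proof -
  have Xc: "X \<in> carrier_mat m m" using X unfolding psdF_def by blast
  have herm: "\<And>a b. a < m \<Longrightarrow> b < m \<Longrightarrow> X$$(b,a) = cnj (X$$(a,b))" using psd_herm[OF X] by blast
  have sge: "0 \<le> s" unfolding s_def using diag_nonneg[OF X j0] .
  have sne: "s \<noteq> 0" unfolding s_def using s0 .
  have cs: "cnj s = s" using sge by (simp add: less_eq_complex_def complex_eq_iff)
  show "\<exists>r>0. s = of_real r"
  proof (intro exI conjI)
    show "s = of_real (Re s)" using sge by (simp add: less_eq_complex_def complex_eq_iff)
    show "0 < Re s" using sge sne by (auto simp: less_eq_complex_def complex_eq_iff)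
  qed
  have X'i: "X'$$(a,b) = X$$(a,b) - x a * cnj (x b) / s" if "a < m" "b < m" for a b
    unfolding X'_def using that by simp
  show Xd: "X$$(a,b) = X'$$(a,b) + x a * cnj (x b) / s" if "a < m" "b < m" for a b
    using X'i[OF that] by simp
  have X'c: "X' \<in> carrier_mat m m" unfolding X'_def by simp
  have herm': "\<forall>a<m. \<forall>b<m. X'$$(b,a) = cnj (X'$$(a,b))"
  proof (intro allI impI)
    fix a b assume a: "a < m" and b: "b < m"
    show "X'$$(b,a) = cnj (X'$$(a,b))" unfolding X'i[OF a b] X'i[OF b a]
      using herm[OF a b] cs by (simp add: mult.commute)
  qed
  have qf': "0 \<le> qf m X' f" for f
  proof -
    define e where "e = (\<lambda>l. if l = j0 then 1 else (0::complex))"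
    define \<alpha> where "\<alpha> = (\<Sum>b<m. cnj (x b) * f b)"
    define \<beta> where "\<beta> = (\<Sum>a<m. cnj (f a) * x a)"
    have ba: "\<beta> = cnj \<alpha>" unfolding \<alpha>_def \<beta>_def cnj_sum by (simp add: mult.commute)
    define c where "c = - \<alpha> / s"
    have t1: "(\<Sum>a<m. cnj (e a) * (\<Sum>b<m. X$$(a,b) * f b)) = \<alpha>"
    proof -
      have "(\<Sum>a<m. cnj (e a) * (\<Sum>b<m. X$$(a,b) * f b)) = (\<Sum>b<m. X$$(j0,b) * f b)"
        unfolding e_def using sum_delta2[OF j0, of "\<lambda>a. (\<Sum>b<m. X$$(a,b) * f b)"] by simp
      also have "\<dots> = \<alpha>" unfolding \<alpha>_def x_def
      proof (rule sum.cong[OF refl])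
        fix b assume "b \<in> {..<m}"
        then have "X$$(j0,b) = cnj (X$$(b,j0))" using herm[of b j0] j0 by simp
        then show "X$$(j0,b) * f b = cnj (X$$(b,j0)) * f b" by simp
      qed
      finally show ?thesis .
    qed
    have t2: "(\<Sum>a<m. cnj (f a) * (\<Sum>b<m. X$$(a,b) * e b)) = \<beta>"
      unfolding \<beta>_def x_def e_def
    proof (rule sum.cong[OF refl])
      fix a assume "a \<in> {..<m}"
      show "cnj (f a) * (\<Sum>b<m. X$$(a,b) * (if b = j0 then 1 else 0)) = cnj (f a) * X$$(a,j0)"
        using sum_delta1[OF j0, of "\<lambda>b. X$$(a,b)"] by simp
    qed
    have t3: "qf m X e = s" unfolding e_def s_def using qf_e[OF j0] .
    have "qf m X (\<lambda>i. f i + c * e i) = qf m X f + cnj c * \<alpha> + c * \<beta> + cnj c * c * s"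
      unfolding qf_expand t1 t2 t3 ..
    also have "\<dots> = qf m X f - \<alpha> * \<beta> / s"
      unfolding c_def using cs sne ba by (simp add: field_simps power2_eq_square)
    also have "\<dots> = qf m X' f"
    proof -
      have "qf m X' f = (\<Sum>a<m. \<Sum>b<m. cnj (f a) * X$$(a,b) * f b - (cnj (f a) * x a) * (cnj (x b) * f b) / s)"
        unfolding qf_def
        by (intro sum.cong refl) (simp add: X'i algebra_simps)
      also have "\<dots> = qf m X f - (\<Sum>a<m. \<Sum>b<m. (cnj (f a) * x a) * (cnj (x b) * f b)) / s"
        unfolding qf_def by (simp add: sum_subtractf sum_divide_distrib)
      also have "(\<Sum>a<m. \<Sum>b<m. (cnj (f a) * x a) * (cnj (x b) * f b)) = \<beta> * \<alpha>"
        unfolding \<alpha>_def \<beta>_def by (simp add: sum_distrib_left sum_distrib_right) (rule sum.swap)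
      finally show ?thesis by (simp add: mult.commute)
    qed
    finally have e: "qf m X (\<lambda>i. f i + c * e i) = qf m X' f" .
    show ?thesis unfolding e[symmetric] using X unfolding psdF_def by blast
  qed
  show "psdF m X'" unfolding psdF_def using X'c herm' qf' by blast
  show "{j\<in>{..<m}. X'$$(j,j) \<noteq> 0} \<subset> {j\<in>{..<m}. X$$(j,j) \<noteq> 0}"
  proof
    show "{j\<in>{..<m}. X'$$(j,j) \<noteq> 0} \<subseteq> {j\<in>{..<m}. X$$(j,j) \<noteq> 0}"
    proof
      fix j assume "j \<in> {j\<in>{..<m}. X'$$(j,j) \<noteq> 0}"
      then have j: "j < m" and nz: "X'$$(j,j) \<noteq> 0" by auto
      show "j \<in> {j\<in>{..<m}. X$$(j,j) \<noteq> 0}"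
      proof (rule ccontr)
        assume "j \<notin> {j\<in>{..<m}. X$$(j,j) \<noteq> 0}"
        then have z: "X$$(j,j) = 0" using j by auto
        have "x j = 0" unfolding x_def using col_zero(2)[OF X j z j0] .
        then have "X'$$(j,j) = 0" using X'i[OF j j] z by simp
        with nz show False by simp
      qed
    qed
    have "X'$$(j0,j0) = 0" using X'i[OF j0 j0] cs sne unfolding x_def s_def by simp
    then show "{j\<in>{..<m}. X'$$(j,j) \<noteq> 0} \<noteq> {j\<in>{..<m}. X$$(j,j) \<noteq> 0}" using j0 s0 by blast
  qed
  show "hs m X M = hs m X' M + qf m M x / s" if M: "M \<in> carrier_mat m m" for M
  proof -
    have "hs m X M = (\<Sum>a<m. \<Sum>b<m. cnj (X'$$(a,b)) * M$$(a,b) + cnj (x a) * M$$(a,b) * x b / s)"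
      unfolding hs_def
      by (intro sum.cong refl) (simp add: Xd cs algebra_simps)
    also have "\<dots> = hs m X' M + qf m M x / s"
      unfolding hs_def qf_def by (simp add: sum.distrib sum_divide_distrib)
    finally show ?thesis .
  qed
qed

lemma T_ind: assumes M: "psdF m M"
  shows "\<forall>X. psdF m X \<longrightarrow> card {j\<in>{..<m}. X$$(j,j) \<noteq> 0} = N \<longrightarrow>
     (0 \<le> hs m X M \<and> (hs m X M = 0 \<longrightarrow> (\<forall>a<m. \<forall>b<m. (\<Sum>l<m. M$$(a,l) * X$$(l,b)) = 0)))"
proof (induction N rule: less_induct)
  case (less N)
  have Mc: "M \<in> carrier_mat m m" using M unfolding psdF_def by blast
  show ?case
  proof (intro allI impI)
    fix X assume X: "psdF m X" and N: "card {j\<in>{..<m}. X$$(j,j) \<noteq> 0} = N"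
    show "0 \<le> hs m X M \<and> (hs m X M = 0 \<longrightarrow> (\<forall>a<m. \<forall>b<m. (\<Sum>l<m. M$$(a,l) * X$$(l,b)) = 0))"
    proof (cases "\<exists>j0<m. X$$(j0,j0) \<noteq> 0")
      case False
      have z: "X$$(a,b) = 0" if "a < m" "b < m" for a b
        using col_zero(1)[OF X that(2) _ that(1)] False that by blast
      have "hs m X M = 0" unfolding hs_def using z by simp
      moreover have "(\<Sum>l<m. M$$(a,l) * X$$(l,b)) = 0" if "b < m" for a b using z that by simp
      ultimately show ?thesis by simp
    next
      case True
      then obtain j0 where j0: "j0 < m" and s0: "X$$(j0,j0) \<noteq> 0" by blast
      define s where "s = X$$(j0,j0)"
      define x where "x = (\<lambda>l. X$$(l,j0))"
      define X' where "X' = mat m m (\<lambda>(a,b). X$$(a,b) - x a * cnj (x b) / s)"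
      have st1: "psdF m X'" unfolding X'_def x_def s_def by (rule schur_step(1)[OF X j0 s0])
      have st2: "{j\<in>{..<m}. X'$$(j,j) \<noteq> 0} \<subset> {j\<in>{..<m}. X$$(j,j) \<noteq> 0}"
        unfolding X'_def x_def s_def by (rule schur_step(2)[OF X j0 s0])
      have st3: "hs m X M = hs m X' M + qf m M x / s" 
        unfolding X'_def x_def s_def by (rule schur_step(3)[OF X j0 s0 Mc])
      have st4: "X$$(a,b) = X'$$(a,b) + x a * cnj (x b) / s" if "a < m" "b < m" for a b
        unfolding X'_def x_def s_def by (rule schur_step(4)[OF X j0 s0 that])
      have st5: "\<exists>r>0. s = of_real r" unfolding s_def by (rule schur_step(5)[OF X j0 s0])
      have lt: "card {j\<in>{..<m}. X'$$(j,j) \<noteq> 0} < N" unfolding N[symmetric]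
        by (rule psubset_card_mono) (use st2 in auto)
      have IH: "0 \<le> hs m X' M \<and> (hs m X' M = 0 \<longrightarrow> (\<forall>a<m. \<forall>b<m. (\<Sum>l<m. M$$(a,l) * X'$$(l,b)) = 0))"
        using less.IH[OF lt] st1 by blast
      obtain r where r: "r > 0" "s = of_real r" using st5 by blast
      have q0: "0 \<le> qf m M x" using M unfolding psdF_def by blast
      have q1: "0 \<le> qf m M x / s" using q0 r by (simp add: less_eq_complex_def)
      have hsX: "hs m X M = hs m X' M + qf m M x / s" using st3 .
      show ?thesis
      proof
        show "0 \<le> hs m X M" unfolding hsX using IH q1 by simp
        show "hs m X M = 0 \<longrightarrow> (\<forall>a<m. \<forall>b<m. (\<Sum>l<m. M$$(a,l) * X$$(l,b)) = 0)"
        proof (intro impI allI)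
          fix a b assume h0: "hs m X M = 0" and a: "a < m" and b: "b < m"
          have z1: "hs m X' M = 0" and z2: "qf m M x / s = 0"
            using cnonneg_sum0[of "hs m X' M" "qf m M x / s"] IH q1 h0 hsX by auto
          have MX': "(\<Sum>l<m. M$$(a,l) * X'$$(l,b)) = 0" using IH z1 a b by blast
          have "qf m M x = 0" using z2 r by simp
          then have Mx: "(\<Sum>l<m. M$$(a,l) * x l) = 0" using psd_vec[OF M] a by blast
          have "(\<Sum>l<m. M$$(a,l) * X$$(l,b)) = (\<Sum>l<m. M$$(a,l) * X'$$(l,b) + (M$$(a,l) * x l) * (cnj (x b) / s))"
            by (rule sum.cong[OF refl]) (simp add: st4 b algebra_simps)
          also have "\<dots> = (\<Sum>l<m. M$$(a,l) * X'$$(l,b)) + (\<Sum>l<m. M$$(a,l) * x l) * (cnj (x b) / s)"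
            by (simp add: sum.distrib sum_distrib_right sum_divide_distrib)
          also have "\<dots> = 0" using MX' Mx by simp
          finally show "(\<Sum>l<m. M$$(a,l) * X$$(l,b)) = 0" .
        qed
      qed
    qed
  qed
qed

lemma trace_zero: assumes X: "psdF m X" and M: "psdF m M" and h: "hs m X M = 0"
  and ker: "\<forall>v. (\<forall>i<m. rv m X v i = 0) \<longrightarrow> (\<forall>i<m. rv m M v i = 0)"
  shows "M = 0\<^sub>m m m"
proof -
  have Mc: "M \<in> carrier_mat m m" using M unfolding psdF_def by blast
  have MX: "(\<Sum>l<m. M$$(a,l) * X$$(l,b)) = 0" if "a < m" "b < m" for a b
    using T_ind[OF M] X h that by blast
  have hX: "\<And>a b. a < m \<Longrightarrow> b < m \<Longrightarrow> X$$(b,a) = cnj (X$$(a,b))" using psd_herm[OF X] by blast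
  have hM: "\<And>a b. a < m \<Longrightarrow> b < m \<Longrightarrow> M$$(b,a) = cnj (M$$(a,b))" using psd_herm[OF M] by blast
  have col: "M$$(l,b) = 0" if l: "l < m" and b: "b < m" for l b
  proof -
    define v where "v = (\<lambda>l. M$$(l,b))"
    have "rv m X v i = 0" if i: "i < m" for i
    proof -
      have "rv m X v i = (\<Sum>l<m. cnj (M$$(b,l) * X$$(l,i)))"
        unfolding rv_def v_def
      proof (rule sum.cong[OF refl])
        fix l assume "l \<in> {..<m}"
        then have l: "l < m" by simp
        show "X$$(i,l) * M$$(l,b) = cnj (M$$(b,l) * X$$(l,i))"
          using hX[OF l i] hM[OF l b] by (simp add: mult.commute)
      qed
      also have "\<dots> = cnj (\<Sum>l<m. M$$(b,l) * X$$(l,i))" by (simp add: cnj_sum)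
      also have "\<dots> = 0" using MX[OF b i] by simp
      finally show ?thesis .
    qed
    then have "rv m M v b = 0" using ker b by blast
    then have "(\<Sum>l<m. cnj (M$$(l,b)) * M$$(l,b)) = 0"
      unfolding rv_def v_def
    proof -
      assume a: "(\<Sum>j<m. M$$(b,j) * M$$(j,b)) = 0"
      have "(\<Sum>l<m. cnj (M$$(l,b)) * M$$(l,b)) = (\<Sum>j<m. M$$(b,j) * M$$(j,b))"
      proof (rule sum.cong[OF refl])
        fix j assume "j \<in> {..<m}"
        then show "cnj (M$$(j,b)) * M$$(j,b) = M$$(b,j) * M$$(j,b)" using hM[of j b] b by simp
      qed
      then show ?thesis using a by simp
    qed
    then have "of_real (\<Sum>l<m. (cmod (M$$(l,b)))^2) = (0::complex)" unfolding cnj_mult_self by simp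
    then have "(\<Sum>l<m. (cmod (M$$(l,b)))^2) = 0" using of_real_eq_0_iff by blast
    then have "\<forall>l\<in>{..<m}. (cmod (M$$(l,b)))^2 = 0" by (subst (asm) sum_nonneg_eq_0_iff) auto
    then show ?thesis using l by simp
  qed
  show ?thesis
    by (rule eq_matI) (use Mc col in auto)
qed

lemma ker_iff: assumes A: "A \<in> carrier_mat m m"
  shows "v \<in> mat_kernel A \<longleftrightarrow> v \<in> carrier_vec m \<and> (\<forall>i<m. rv m A (\<lambda>j. v$j) i = 0)"
proof
  assume "v \<in> mat_kernel A"
  then have v: "v \<in> carrier_vec m" and z: "A *\<^sub>v v = 0\<^sub>v m" using mat_kernelD[OF A] by auto
  have "rv m A (\<lambda>j. v$j) i = 0" if i: "i < m" for i
  proof -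
    have "rv m A (\<lambda>j. v$j) i = (A *\<^sub>v v) $ i" unfolding rv_def using mv_idx[OF A v i] by simp
    also have "\<dots> = 0" using z i by simp
    finally show ?thesis .
  qed
  then show "v \<in> carrier_vec m \<and> (\<forall>i<m. rv m A (\<lambda>j. v$j) i = 0)" using v by blast
next
  assume h: "v \<in> carrier_vec m \<and> (\<forall>i<m. rv m A (\<lambda>j. v$j) i = 0)"
  then have v: "v \<in> carrier_vec m" by blast
  have "A *\<^sub>v v = 0\<^sub>v m"
  proof (rule eq_vecI)
    fix i assume "i < dim_vec (0\<^sub>v m :: complex vec)"
    then have i: "i < m" by simp
    have "(A *\<^sub>v v) $ i = rv m A (\<lambda>j. v$j) i" unfolding rv_def using mv_idx[OF A v i] by simp
    then show "(A *\<^sub>v v) $ i = 0\<^sub>v m $ i" using h i by simp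
  qed (use A in simp)
  then show "v \<in> mat_kernel A" using mat_kernelI[OF A v] by blast
qed

lemma rv_vec: "rv m M (\<lambda>j. vec m f $ j) i = rv m M f i"
  unfolding rv_def by (rule sum.cong) auto

lemma qf_rv: "qf k M v = (\<Sum>i<k. cnj (v i) * rv k M v i)"
  unfolding qf_def rv_def by (simp add: sum_distrib_left mult.assoc)

lemma hs_self0: assumes C: "C \<in> carrier_mat k k" and h: "hs k C C = 0" shows "C = 0\<^sub>m k k"
proof -
  have "of_real (\<Sum>i<k. \<Sum>j<k. (cmod (C$$(i,j)))^2) = hs k C C"
    unfolding hs_def cnj_mult_self by simp
  then have "(\<Sum>i<k. \<Sum>j<k. (cmod (C$$(i,j)))^2) = 0" using h of_real_eq_0_iff by metis
  then have "\<forall>i\<in>{..<k}. (\<Sum>j<k. (cmod (C$$(i,j)))^2) = 0"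
    by (subst (asm) sum_nonneg_eq_0_iff) (auto intro: sum_nonneg)
  then have z: "\<forall>i\<in>{..<k}. \<forall>j\<in>{..<k}. (cmod (C$$(i,j)))^2 = 0"
    by (subst (asm) sum_nonneg_eq_0_iff) auto
  show ?thesis by (rule eq_matI) (use C z in auto)
qed

lemma adj_adj: fixes A :: "complex mat" assumes A: "A \<in> carrier_mat k l" shows "mat_adjoint (mat_adjoint A) = A"
proof -
  have aA: "mat_adjoint A \<in> carrier_mat l k" using adj_carrier[OF A] .
  have aaA: "mat_adjoint (mat_adjoint A) \<in> carrier_mat k l" using adj_carrier[OF aA] .
  show ?thesis
  proof (rule eq_matI)
    fix i j assume "i < dim_row A" "j < dim_col A"
    then have ij: "i < k" "j < l" using A by auto
    show "mat_adjoint (mat_adjoint A) $$ (i,j) = A $$ (i,j)"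
      using adj_idx[OF aA ij] adj_idx[OF A ij(2) ij(1)] by simp
  qed (use A aaA in auto)
qed

lemma hsR: assumes A: "A \<in> carrier_mat n n" and Y: "Y \<in> carrier_mat n n" and z: "A * Y = 0\<^sub>m n n"
  shows "hs n Y (mat_adjoint A * A) = 0"
proof -
  have "hs n Y (mat_adjoint A * A) = (\<Sum>i<n. \<Sum>j<n. cnj (Y$$(i,j)) * (\<Sum>l<n. cnj (A$$(l,i)) * A$$(l,j)))"
    unfolding hs_def by (intro sum.cong refl) (simp add: adj_mult_idx[OF A A])
  also have "\<dots> = (\<Sum>j<n. \<Sum>i<n. cnj (Y$$(i,j)) * (\<Sum>l<n. cnj (A$$(l,i)) * A$$(l,j)))" by (rule sum.swap)
  also have "\<dots> = (\<Sum>j<n. \<Sum>l<n. cnj ((A * Y)$$(l,j)) * A$$(l,j))"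
  proof (rule sum.cong[OF refl])
    fix j assume j: "j \<in> {..<n}"
    have "(\<Sum>i<n. cnj (Y$$(i,j)) * (\<Sum>l<n. cnj (A$$(l,i)) * A$$(l,j))) = (\<Sum>i<n. \<Sum>l<n. cnj (A$$(l,i) * Y$$(i,j)) * A$$(l,j))"
      by (simp add: sum_distrib_left algebra_simps)
    also have "\<dots> = (\<Sum>l<n. \<Sum>i<n. cnj (A$$(l,i) * Y$$(i,j)) * A$$(l,j))" by (rule sum.swap)
    also have "\<dots> = (\<Sum>l<n. cnj ((A * Y)$$(l,j)) * A$$(l,j))"
    proof (rule sum.cong[OF refl])
      fix l assume l: "l \<in> {..<n}"
      show "(\<Sum>i<n. cnj (A$$(l,i) * Y$$(i,j)) * A$$(l,j)) = cnj ((A * Y)$$(l,j)) * A$$(l,j)"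
        using l j by (simp add: mult_idx[OF A Y] cnj_sum sum_distrib_right)
    qed
    finally show "(\<Sum>i<n. cnj (Y$$(i,j)) * (\<Sum>l<n. cnj (A$$(l,i)) * A$$(l,j))) = (\<Sum>l<n. cnj ((A * Y)$$(l,j)) * A$$(l,j))" .
  qed
  also have "\<dots> = 0" using z by simp
  finally show ?thesis .
qed

lemma hsL: assumes A: "A \<in> carrier_mat n n" and Y: "Y \<in> carrier_mat n n" and z: "Y * A = 0\<^sub>m n n"
  shows "hs n Y (A * mat_adjoint A) = 0"
proof -
  have aA: "mat_adjoint A \<in> carrier_mat n n" using adj_carrier[OF A] .
  have "hs n Y (A * mat_adjoint A) = (\<Sum>i<n. \<Sum>j<n. cnj (Y$$(i,j)) * (\<Sum>l<n. A$$(i,l) * cnj (A$$(j,l))))"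
    unfolding hs_def by (intro sum.cong refl) (simp add: mult_idx[OF A aA] adj_idx[OF A])
  also have "\<dots> = (\<Sum>i<n. \<Sum>l<n. A$$(i,l) * cnj ((Y * A)$$(i,l)))"
  proof (rule sum.cong[OF refl])
    fix i assume i: "i \<in> {..<n}"
    have "(\<Sum>j<n. cnj (Y$$(i,j)) * (\<Sum>l<n. A$$(i,l) * cnj (A$$(j,l)))) = (\<Sum>j<n. \<Sum>l<n. A$$(i,l) * cnj (Y$$(i,j) * A$$(j,l)))"
      by (simp add: sum_distrib_left algebra_simps)
    also have "\<dots> = (\<Sum>l<n. \<Sum>j<n. A$$(i,l) * cnj (Y$$(i,j) * A$$(j,l)))" by (rule sum.swap)
    also have "\<dots> = (\<Sum>l<n. A$$(i,l) * cnj ((Y * A)$$(i,l)))"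
    proof (rule sum.cong[OF refl])
      fix l assume l: "l \<in> {..<n}"
      show "(\<Sum>j<n. A$$(i,l) * cnj (Y$$(i,j) * A$$(j,l))) = A$$(i,l) * cnj ((Y * A)$$(i,l))"
        using l i by (simp add: mult_idx[OF Y A] cnj_sum sum_distrib_left)
    qed
    finally show "(\<Sum>j<n. cnj (Y$$(i,j)) * (\<Sum>l<n. A$$(i,l) * cnj (A$$(j,l)))) = (\<Sum>l<n. A$$(i,l) * cnj ((Y * A)$$(i,l)))" .
  qed
  also have "\<dots> = 0" using z by simp
  finally show ?thesis .
qed

lemma qf_zero: "qf k (0\<^sub>m k k) v = 0"
  unfolding qf_def by simp

lemma L1: assumes lin: "lin_map n m phi" and pos: "positive_map n m phi"
  and W: "W \<in> carrier_mat n n" and z: "phi (mat_adjoint W * W) = 0\<^sub>m m m"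
  shows "phi W = 0\<^sub>m m m" "phi (mat_adjoint W) = 0\<^sub>m m m"
proof -
  have aW: "mat_adjoint W \<in> carrier_mat n n" using adj_carrier[OF W] .
  have G: "mat_adjoint W * W \<in> carrier_mat n n" using aW W by simp
  have one: "(1\<^sub>m n :: complex mat) \<in> carrier_mat n n" by simp
  note cs = lin_carrier[OF lin G] lin_carrier[OF lin aW] lin_carrier[OF lin W] lin_carrier[OF lin one]
  have both: "qf m (phi W) v = 0 \<and> qf m (phi (mat_adjoint W)) v = 0" for v
  proof -
    have Wc: "W + c \<cdot>\<^sub>m 1\<^sub>m n \<in> carrier_mat n n" for c using W by simp
    have nn: "0 \<le> c * qf m (phi (mat_adjoint W)) v + cnj c * qf m (phi W) v + (cnj c * c) * qf m (phi (1\<^sub>m n)) v" for c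
    proof -
      have "0 \<le> qf m (phi (mat_adjoint (W + c \<cdot>\<^sub>m 1\<^sub>m n) * (W + c \<cdot>\<^sub>m 1\<^sub>m n))) v"
        using pos_psd[OF pos gram_psd[OF Wc[of c]]] unfolding psdF_def by blast
      also have "qf m (phi (mat_adjoint (W + c \<cdot>\<^sub>m 1\<^sub>m n) * (W + c \<cdot>\<^sub>m 1\<^sub>m n))) v = 
         c * qf m (phi (mat_adjoint W)) v + cnj c * qf m (phi W) v + (cnj c * c) * qf m (phi (1\<^sub>m n)) v"
        unfolding phiE[OF lin W] qf4[OF cs] unfolding z qf_zero by simp
      finally show ?thesis .
    qed
    have "0 \<le> of_real t * (qf m (phi (mat_adjoint W)) v + qf m (phi W) v) + (of_real t)^2 * qf m (phi (1\<^sub>m n)) v" for t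
      using nn[of "of_real t"] by (simp add: algebra_simps power2_eq_square)
    then have s1: "qf m (phi (mat_adjoint W)) v + qf m (phi W) v = 0" by (intro cplx_quad0) auto
    have "0 \<le> of_real t * (\<i> * qf m (phi (mat_adjoint W)) v - \<i> * qf m (phi W) v) + (of_real t)^2 * qf m (phi (1\<^sub>m n)) v" for t
      using nn[of "of_real t * \<i>"] by (simp add: algebra_simps power2_eq_square)
    then have s2: "\<i> * qf m (phi (mat_adjoint W)) v - \<i> * qf m (phi W) v = 0" by (intro cplx_quad0) auto
    have "qf m (phi W) v = 0" using xy0[OF s1 s2] .
    then show ?thesis using s1 by simp
  qed
  show "phi W = 0\<^sub>m m m" using polar[OF cs(3)] both by blast
  show "phi (mat_adjoint W) = 0\<^sub>m m m" using polar[OF cs(2)] both by blast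
qed

theorem lemma4p3:
  fixes n m :: nat and phi phi_adj :: "complex mat \<Rightarrow> complex mat" and X :: "complex mat"
  assumes "lin_map n m phi"
    and "positive_map n m phi"
    and "is_hs_adjoint n m phi phi_adj"
    and "psd_mat m X"
  shows "(map_ker m m (R_op X) \<subseteq> map_ker m n phi_adj
            \<longleftrightarrow> mat_kernel X \<subseteq> mat_kernel (phi (1\<^sub>m n)))
       \<and> (map_ker m m (R_op X) \<subseteq> map_ker m n phi_adj
            \<longrightarrow> map_ker n n (R_op (phi_adj X)) \<subseteq> map_ker n m phi)
       \<and> (map_ker m m (L_op X) \<subseteq> map_ker m n phi_adj
            \<longleftrightarrow> mat_kernel X \<subseteq> mat_kernel (phi (1\<^sub>m n)))
       \<and> (map_ker m m (L_op X) \<subseteq> map_ker m n phi_adj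
            \<longrightarrow> map_ker n n (L_op (phi_adj X)) \<subseteq> map_ker n m phi)"
proof -
  note lin = assms(1) and pos = assms(2) and adj = assms(3)
  have XF: "psdF m X" using assms(4) psd_iff by blast
  have Xc: "X \<in> carrier_mat m m" using XF unfolding psdF_def by blast
  have hX: "\<And>a b. a < m \<Longrightarrow> b < m \<Longrightarrow> X$$(b,a) = cnj (X$$(a,b))" using psd_herm[OF XF] by blast
  define P1 where "P1 = phi (1\<^sub>m n)"
  have one: "(1\<^sub>m n :: complex mat) \<in> carrier_mat n n" by simp
  have P1F: "psdF m P1" unfolding P1_def using pos_psd[OF pos one_psd] .
  have P1c: "P1 \<in> carrier_mat m m" unfolding P1_def using lin_carrier[OF lin one] .
  have adjc: "phi_adj A \<in> carrier_mat n n" if "A \<in> carrier_mat m m" for A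
    using adj that unfolding is_hs_adjoint_def by blast
  have adjhs: "hs m A (phi B) = hs n (phi_adj A) B" if A: "A \<in> carrier_mat m m" and B: "B \<in> carrier_mat n n" for A B
  proof -
    have "mat_trace (mat_adjoint A * phi B) = mat_trace (mat_adjoint (phi_adj A) * B)"
      using adj A B unfolding is_hs_adjoint_def by blast
    then show ?thesis using hs_trace[OF A lin_carrier[OF lin B]] hs_trace[OF adjc[OF A] B] by simp
  qed
  have H1: "phi_adj A = 0\<^sub>m n n" if A: "A \<in> carrier_mat m m" and h: "\<forall>B\<in>carrier_mat n n. hs m A (phi B) = 0" for A
  proof -
    have "hs n (phi_adj A) (phi_adj A) = 0" using h adjhs[OF A adjc[OF A]] adjc[OF A] by simp
    then show ?thesis using hs_self0[OF adjc[OF A]] by blast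
  qed
  have FA: "rv m (phi B) (\<lambda>j. v$j) i = 0 \<and> rva m (phi B) (\<lambda>j. v$j) i = 0"
    if v: "v \<in> mat_kernel P1" and B: "B \<in> carrier_mat n n" and i: "i < m" for v B i
  proof -
    have "\<forall>i<m. rv m P1 (\<lambda>j. v$j) i = 0" using v ker_iff[OF P1c] by blast
    then have "qf m P1 (\<lambda>j. v$j) = 0" unfolding qf_rv by simp
    then show ?thesis using factA[OF lin pos, of "\<lambda>j. v$j"] B i unfolding P1_def by blast
  qed
  let ?KX = "mat_kernel X" and ?K1 = "mat_kernel P1"
  have C1: "map_ker m m (R_op X) \<subseteq> map_ker m n phi_adj" if K: "?KX \<subseteq> ?K1"
  proof
    fix A assume "A \<in> map_ker m m (R_op X)"
    then have A: "A \<in> carrier_mat m m" and AX: "A * X = 0\<^sub>m m m" unfolding map_ker_def R_op_def by auto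
    have "hs m A (phi B) = 0" if B: "B \<in> carrier_mat n n" for B
    proof -
      define r where "r i = (\<lambda>j. cnj (A$$(i,j)))" for i
      have rz: "rv m (phi B) (r i) i = 0" if i: "i < m" for i
      proof -
        have "rv m X (\<lambda>j. vec m (r i) $ j) l = 0" if l: "l < m" for l
        proof -
          have "rv m X (\<lambda>j. vec m (r i) $ j) l = rv m X (r i) l" by (rule rv_vec)
          also have "\<dots> = (\<Sum>j<m. cnj (A$$(i,j) * X$$(j,l)))"
            unfolding rv_def r_def
          proof (rule sum.cong[OF refl])
            fix j assume "j \<in> {..<m}"
            then have "X$$(l,j) = cnj (X$$(j,l))" using hX[of j l] l by simp
            then show "X$$(l,j) * cnj (A$$(i,j)) = cnj (A$$(i,j) * X$$(j,l))" by (simp add: mult.commute)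
          qed
          also have "\<dots> = cnj ((A * X)$$(i,l))" using mult_idx[OF A Xc i l] by (simp add: cnj_sum)
          also have "\<dots> = 0" using AX i l by simp
          finally show ?thesis .
        qed
        then have "vec m (r i) \<in> ?KX" using ker_iff[OF Xc] by simp
        then have "vec m (r i) \<in> ?K1" using K by blast
        then show ?thesis using FA[OF _ B i] rv_vec by metis
      qed
      have "hs m A (phi B) = (\<Sum>i<m. rv m (phi B) (r i) i)"
        unfolding hs_def rv_def r_def by (intro sum.cong refl) (simp add: mult.commute)
      also have "\<dots> = 0" using rz by simp
      finally show ?thesis .
    qed
    then have "phi_adj A = 0\<^sub>m n n" using H1[OF A] by blast
    then show "A \<in> map_ker m n phi_adj" unfolding map_ker_def using A by simp
  qed
  have C2: "map_ker m m (L_op X) \<subseteq> map_ker m n phi_adj" if K: "?KX \<subseteq> ?K1"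
  proof
    fix A assume "A \<in> map_ker m m (L_op X)"
    then have A: "A \<in> carrier_mat m m" and XA: "X * A = 0\<^sub>m m m" unfolding map_ker_def L_op_def by auto
    have "hs m A (phi B) = 0" if B: "B \<in> carrier_mat n n" for B
    proof -
      define c where "c j = (\<lambda>i. A$$(i,j))" for j
      have cz: "rva m (phi B) (c j) j = 0" if j: "j < m" for j
      proof -
        have "rv m X (\<lambda>i. vec m (c j) $ i) l = 0" if l: "l < m" for l
        proof -
          have "rv m X (\<lambda>i. vec m (c j) $ i) l = (X * A)$$(l,j)"
            unfolding rv_vec rv_def c_def using mult_idx[OF Xc A l j] by simp
          also have "\<dots> = 0" using XA j l by simp
          finally show ?thesis .
        qed
        then have "vec m (c j) \<in> ?KX" using ker_iff[OF Xc] by simp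
        then have "vec m (c j) \<in> ?K1" using K by blast
        then have "rva m (phi B) (\<lambda>i. vec m (c j) $ i) j = 0" using FA[OF _ B j] by blast
        moreover have "rva m (phi B) (\<lambda>i. vec m (c j) $ i) j = rva m (phi B) (c j) j"
          unfolding rva_def by (rule sum.cong) auto
        ultimately show ?thesis by simp
      qed
      have "hs m A (phi B) = (\<Sum>j<m. \<Sum>i<m. cnj (A$$(i,j)) * phi B $$ (i,j))"
        unfolding hs_def by (rule sum.swap)
      also have "\<dots> = (\<Sum>j<m. cnj (rva m (phi B) (c j) j))"
        unfolding rva_def c_def cnj_sum by (intro sum.cong refl) (simp add: mult.commute)
      also have "\<dots> = 0" using cz by simp
      finally show ?thesis .
    qed
    then have "phi_adj A = 0\<^sub>m n n" using H1[OF A] by blast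
    then show "A \<in> map_ker m n phi_adj" unfolding map_ker_def using A by simp
  qed
  have C34: "v \<in> ?K1" if v: "v \<in> ?KX" and h: "\<And>A. A \<in> carrier_mat m m \<Longrightarrow> A * X = 0\<^sub>m m m \<Longrightarrow> X * A = 0\<^sub>m m m \<Longrightarrow> phi_adj A = 0\<^sub>m n n" for v
  proof -
    have vc: "v \<in> carrier_vec m" and vk: "\<forall>l<m. rv m X (\<lambda>j. v$j) l = 0" using v ker_iff[OF Xc] by auto
    define A where "A = mat m m (\<lambda>(i,j). v$i * cnj (v$j))"
    have A: "A \<in> carrier_mat m m" unfolding A_def by simp
    have AX: "A * X = 0\<^sub>m m m"
    proof (rule eq_matI)
      fix i l assume "i < dim_row (0\<^sub>m m m :: complex mat)" "l < dim_col (0\<^sub>m m m :: complex mat)"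
      then have i: "i < m" and l: "l < m" by auto
      have "(A * X)$$(i,l) = (\<Sum>j<m. v$i * cnj (X$$(l,j) * v$j))"
        unfolding mult_idx[OF A Xc i l]
      proof (rule sum.cong[OF refl])
        fix j assume "j \<in> {..<m}"
        then have j: "j < m" by simp
        have "X$$(j,l) = cnj (X$$(l,j))" using hX[OF l j] .
        then show "A$$(i,j) * X$$(j,l) = v$i * cnj (X$$(l,j) * v$j)" unfolding A_def using i j by simp
      qed
      also have "\<dots> = v$i * cnj (rv m X (\<lambda>j. v$j) l)" unfolding rv_def by (simp add: cnj_sum sum_distrib_left)
      also have "\<dots> = 0" using vk l by simp
      finally show "(A * X)$$(i,l) = 0\<^sub>m m m $$ (i,l)" using i l by simp
    qed (use A Xc in auto)
    have XA: "X * A = 0\<^sub>m m m"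
    proof (rule eq_matI)
      fix i l assume "i < dim_row (0\<^sub>m m m :: complex mat)" "l < dim_col (0\<^sub>m m m :: complex mat)"
      then have i: "i < m" and l: "l < m" by auto
      have "(X * A)$$(i,l) = (\<Sum>j<m. X$$(i,j) * v$j * cnj (v$l))"
        unfolding mult_idx[OF Xc A i l]
        by (rule sum.cong[OF refl]) (use l in \<open>simp add: A_def\<close>)
      also have "\<dots> = rv m X (\<lambda>j. v$j) i * cnj (v$l)" unfolding rv_def by (simp add: sum_distrib_right)
      also have "\<dots> = 0" using vk i by simp
      finally show "(X * A)$$(i,l) = 0\<^sub>m m m $$ (i,l)" using i l by simp
    qed (use A Xc in auto)
    have z: "phi_adj A = 0\<^sub>m n n" using h[OF A AX XA] .
    have "hs m A P1 = hs n (phi_adj A) (1\<^sub>m n)" unfolding P1_def using adjhs[OF A one] .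
    also have "\<dots> = 0" unfolding z hs_def by simp
    finally have h0: "hs m A P1 = 0" .
    have "hs m A P1 = qf m P1 (\<lambda>j. v$j)"
      unfolding hs_def qf_def by (intro sum.cong refl) (simp add: A_def mult.commute mult.left_commute)
    then have "qf m P1 (\<lambda>j. v$j) = 0" using h0 by simp
    then have "\<forall>i<m. rv m P1 (\<lambda>j. v$j) i = 0" using psd_rv0[OF P1F] by blast
    then show ?thesis using ker_iff[OF P1c] vc by blast
  qed
  have C3: "?KX \<subseteq> ?K1" if "map_ker m m (R_op X) \<subseteq> map_ker m n phi_adj"
  proof
    fix v assume "v \<in> ?KX"
    then show "v \<in> ?K1"
    proof (rule C34)
      fix A assume "A \<in> carrier_mat m m" "A * X = 0\<^sub>m m m"
      then have "A \<in> map_ker m m (R_op X)" unfolding map_ker_def R_op_def by simp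
      then show "phi_adj A = 0\<^sub>m n n" using that unfolding map_ker_def by blast
    qed
  qed
  have C4: "?KX \<subseteq> ?K1" if "map_ker m m (L_op X) \<subseteq> map_ker m n phi_adj"
  proof
    fix v assume "v \<in> ?KX"
    then show "v \<in> ?K1"
    proof (rule C34)
      fix A assume "A \<in> carrier_mat m m" "X * A = 0\<^sub>m m m"
      then have "A \<in> map_ker m m (L_op X)" unfolding map_ker_def L_op_def by simp
      then show "phi_adj A = 0\<^sub>m n n" using that unfolding map_ker_def by blast
    qed
  qed
  define Y where "Y = phi_adj X"
  have Yc: "Y \<in> carrier_mat n n" unfolding Y_def using adjc[OF Xc] .
  have KG: "phi G = 0\<^sub>m m m" if K: "?KX \<subseteq> ?K1" and G: "G \<in> carrier_mat n n" and GF: "psdF n G" and hG: "hs n Y G = 0" for G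
  proof -
    have MF: "psdF m (phi G)" using pos_psd[OF pos GF] .
    have "hs m X (phi G) = 0" using adjhs[OF Xc G] hG unfolding Y_def by simp
    moreover have "\<forall>v. (\<forall>i<m. rv m X v i = 0) \<longrightarrow> (\<forall>i<m. rv m (phi G) v i = 0)"
    proof (intro allI impI)
      fix v i assume hv: "\<forall>i<m. rv m X v i = 0" and i: "i < m"
      have "vec m v \<in> ?KX" using ker_iff[OF Xc] hv rv_vec by simp
      then have "vec m v \<in> ?K1" using K by blast
      then have "rv m (phi G) (\<lambda>j. vec m v $ j) i = 0" using FA[OF _ G i] by blast
      then show "rv m (phi G) v i = 0" using rv_vec by metis
    qed
    ultimately show ?thesis using trace_zero[OF XF MF] by blast
  qed
  have C5: "map_ker n n (R_op (phi_adj X)) \<subseteq> map_ker n m phi" if K: "?KX \<subseteq> ?K1"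
  proof
    fix A assume "A \<in> map_ker n n (R_op (phi_adj X))"
    then have A: "A \<in> carrier_mat n n" and AY: "A * Y = 0\<^sub>m n n" unfolding map_ker_def R_op_def Y_def by auto
    have aA: "mat_adjoint A \<in> carrier_mat n n" using adj_carrier[OF A] .
    have "phi (mat_adjoint A * A) = 0\<^sub>m m m"
      using KG[OF K _ gram_psd[OF A] hsR[OF A Yc AY]] aA A by simp
    then have "phi A = 0\<^sub>m m m" using L1(1)[OF lin pos A] by blast
    then show "A \<in> map_ker n m phi" unfolding map_ker_def using A by simp
  qed
  have C6: "map_ker n n (L_op (phi_adj X)) \<subseteq> map_ker n m phi" if K: "?KX \<subseteq> ?K1"
  proof
    fix A assume "A \<in> map_ker n n (L_op (phi_adj X))"
    then have A: "A \<in> carrier_mat n n" and YA: "Y * A = 0\<^sub>m n n" unfolding map_ker_def L_op_def Y_def by auto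
    have aA: "mat_adjoint A \<in> carrier_mat n n" using adj_carrier[OF A] .
    have e: "mat_adjoint (mat_adjoint A) * mat_adjoint A = A * mat_adjoint A" using adj_adj[OF A] by simp
    have "phi (A * mat_adjoint A) = 0\<^sub>m m m"
      using KG[OF K _ gram_psd[OF aA, unfolded e] hsL[OF A Yc YA]] aA A by simp
    then have "phi (mat_adjoint (mat_adjoint A)) = 0\<^sub>m m m" using L1(2)[OF lin pos aA] e by simp
    then have "phi A = 0\<^sub>m m m" using adj_adj[OF A] by simp
    then show "A \<in> map_ker n m phi" unfolding map_ker_def using A by simp
  qed
  show ?thesis unfolding P1_def[symmetric] using C1 C2 C3 C4 C5 C6 by blast
qed

end
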